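(* Let $\varphi = \varphi(a,n): A \times \mathbb{N}\to \mathbb{N}$ be a predicate of $\mathbf{PR}$ (i.e. $\mathrm{sign}\circ\varphi = \varphi$). If $\mathbf{PR}$ derives $\varphi(a,0) = \mathrm{true}_A(a)$, i.e. $\varphi\circ(\mathrm{id}_A,0\circ\Pi_A) = \mathrm{true}_A$, and derives $[\varphi(a,n) \Rightarrow \varphi(a,\mathrm{s}\,n)] = \mathrm{true}_{A\times\mathbb{N}}$, then $\mathbf{PR}$ derives $\varphi = \mathrm{true}_{A\times\mathbb{N}}$.
   Context: $\mathbf{PR}$ is the formal (syntactic) category defined as follows. Objects: generated from a terminal object $\mathbb{1}$ and a natural numbers object $\mathbb{N}$ by binary products. Maps: generated from $0: \mathbb{1} \to \mathbb{N}$, $\mathrm{s}: \mathbb{N}\to\mathbb{N}$, identities, terminal maps $\Pi_A$, projections $\ell,\mathrm{r}$, by composition, induced maps $(f,g)$ and iteration $f\mapsto f^\S: A\times\mathbb{N}\to A$ of endomaps; map equality is the least congruence containing the category axioms, uniqueness of maps into $\mathbb{1}$, $\ell\circ(f,g)=f$, $\mathrm{r}\circ(f,g)=g$, $(\ell h,\mathrm{r} h)=h$, $f^\S(a,0)=a$, $f^\S(a,\mathrm{s}n)=f(f^\S(a,n))$, and Freyd's uniqueness rule for initialised iterates ($h(a,0)=f(a)$ and $h(a,\mathrm{s}n)=g(h(a,n))$ imply $h=g^\S\circ(f\times\mathbb{N})$). Logic on $\mathbb{N}$: $\mathrm{true}=1=\mathrm{s}0$, $\mathrm{true}_A = 1\circ\Pi_A$;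 $\neg 0=1$, $\neg\mathrm{s}n=0$; $\mathrm{sign}=\neg\neg$; $x\vee y=\mathrm{sign}(x+y)$; $[x\Rightarrow y]=\neg x\vee y$. *)

theory Defs
  imports Main
begin

datatype obj = One | NN | Prod obj obj

datatype tm =
    Zero
  | Succ
  | Id obj
  | Bang obj
  | Fst obj obj
  | Snd obj obj
  | Comp tm tm
  | Pair tm tm
  | Iter tm

inductive typed :: "tm \<Rightarrow> obj \<Rightarrow> obj \<Rightarrow> bool" where
  t_zero: "typed Zero One NN"
| t_succ: "typed Succ NN NN"
| t_id: "typed (Id A) A A"
| t_bang: "typed (Bang A) A One"
| t_fst: "typed (Fst A B) (Prod A B) A"
| t_snd: "typed (Snd A B) (Prod A B) B"
| t_comp: "typed f A B \<Longrightarrow> typed g B C \<Longrightarrow> typed (Comp g f) A C"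
| t_pair: "typed f A B \<Longrightarrow> typed g A C \<Longrightarrow> typed (Pair f g) A (Prod B C)"
| t_iter: "typed f A A \<Longrightarrow> typed (Iter f) (Prod A NN) A"

definition zeroA :: "obj \<Rightarrow> tm" where
  "zeroA A = Pair (Id A) (Comp Zero (Bang A))"

definition succA :: "obj \<Rightarrow> tm" where
  "succA A = Pair (Fst A NN) (Comp Succ (Snd A NN))"

inductive peq :: "obj \<Rightarrow> obj \<Rightarrow> tm \<Rightarrow> tm \<Rightarrow> bool" where
  e_refl: "typed f A B \<Longrightarrow> peq A B f f"
| e_sym: "peq A B f g \<Longrightarrow> peq A B g f"
| e_trans: "peq A B f g \<Longrightarrow> peq A B g h \<Longrightarrow> peq A B f h"
| e_comp: "peq A B f f' \<Longrightarrow> peq B C g g' \<Longrightarrow> peq A C (Comp g f) (Comp g' f')"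
| e_pair: "peq A B f f' \<Longrightarrow> peq A C g g' \<Longrightarrow> peq A (Prod B C) (Pair f g) (Pair f' g')"
| e_iter: "peq A A f f' \<Longrightarrow> peq (Prod A NN) A (Iter f) (Iter f')"
| e_idl: "typed f A B \<Longrightarrow> peq A B (Comp (Id B) f) f"
| e_idr: "typed f A B \<Longrightarrow> peq A B (Comp f (Id A)) f"
| e_assoc: "typed f A B \<Longrightarrow> typed g B C \<Longrightarrow> typed h C D \<Longrightarrow>
     peq A D (Comp h (Comp g f)) (Comp (Comp h g) f)"
| e_term: "typed f A One \<Longrightarrow> peq A One f (Bang A)"
| e_fst: "typed f A B \<Longrightarrow> typed g A C \<Longrightarrow> peq A B (Comp (Fst B C) (Pair f g)) f"
| e_snd: "typed f A B \<Longrightarrow> typed g A C \<Longrightarrow> peq A C (Comp (Snd B C) (Pair f g)) g"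
| e_pair_eta: "typed h A (Prod B C) \<Longrightarrow>
     peq A (Prod B C) (Pair (Comp (Fst B C) h) (Comp (Snd B C) h)) h"
| e_iter0: "typed f A A \<Longrightarrow> peq A A (Comp (Iter f) (zeroA A)) (Id A)"
| e_iterS: "typed f A A \<Longrightarrow> peq (Prod A NN) A (Comp (Iter f) (succA A)) (Comp f (Iter f))"
| e_freyd: "typed h (Prod A NN) B \<Longrightarrow> typed f A B \<Longrightarrow> typed g B B \<Longrightarrow>
     peq A B (Comp h (zeroA A)) f \<Longrightarrow>
     peq (Prod A NN) B (Comp h (succA A)) (Comp g h) \<Longrightarrow>
     peq (Prod A NN) B h (Comp (Iter g) (Pair (Comp f (Fst A NN)) (Snd A NN)))"

definition ptrue :: tm where "ptrue = Comp Succ Zero"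
definition ptrueA :: "obj \<Rightarrow> tm" where "ptrueA A = Comp ptrue (Bang A)"

(* neg n = g^S(1, n) with g = 0 o Pi_N, so neg 0 = 1, neg (s n) = 0 *)
definition pneg :: tm where
  "pneg = Comp (Iter (Comp Zero (Bang NN))) (Pair (ptrueA NN) (Id NN))"
definition padd :: tm where "padd = Iter Succ"
definition psign :: tm where "psign = Comp pneg pneg"
definition por :: tm where "por = Comp psign padd"
definition pimp :: tm where "pimp = Comp por (Pair (Comp pneg (Fst NN NN)) (Snd NN NN))"

end

theory Submission
  imports Defs
begin

lemmas ty = typed.intros

lemma ty_ptrue[intro]: "typed ptrue One NN" unfolding ptrue_def by (blast intro: ty)
lemma ty_ptrueA[intro]: "typed (ptrueA A) A NN" unfolding ptrueA_def by (blast intro: ty)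
lemma ty_zeroA[intro]: "typed (zeroA A) A (Prod A NN)" unfolding zeroA_def by (blast intro: ty)
lemma ty_succA[intro]: "typed (succA A) (Prod A NN) (Prod A NN)" unfolding succA_def by (blast intro: ty)
lemma ty_pneg[intro]: "typed pneg NN NN" unfolding pneg_def by (blast intro: ty)
lemma ty_padd[intro]: "typed padd (Prod NN NN) NN" unfolding padd_def by (blast intro: ty)
lemma ty_psign[intro]: "typed psign NN NN" unfolding psign_def by (blast intro: ty)
lemma ty_por[intro]: "typed por (Prod NN NN) NN" unfolding por_def by (blast intro: ty)
lemma ty_pimp[intro]: "typed pimp (Prod NN NN) NN" unfolding pimp_def by (blast intro: ty)

lemma peq_typed: "peq A B f g \<Longrightarrow> typed f A B \<and> typed g A B"
  by (induction rule: peq.induct) (auto intro: ty)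

lemma peq_trans[trans]: "peq A B f g \<Longrightarrow> peq A B g h \<Longrightarrow> peq A B f h"
  by (rule e_trans)

lemma cong_l: "peq B C g g' \<Longrightarrow> typed f A B \<Longrightarrow> peq A C (Comp g f) (Comp g' f)"
  by (rule e_comp, rule e_refl) auto
lemma cong_r: "typed g B C \<Longrightarrow> peq A B f f' \<Longrightarrow> peq A C (Comp g f) (Comp g f')"
  by (rule e_comp, assumption, rule e_refl)
lemma cong_p1: "peq A B f f' \<Longrightarrow> typed g A C \<Longrightarrow> peq A (Prod B C) (Pair f g) (Pair f' g)"
  by (rule e_pair, assumption, rule e_refl)
lemma cong_p2: "typed f A B \<Longrightarrow> peq A C g g' \<Longrightarrow> peq A (Prod B C) (Pair f g) (Pair f g')"
  by (rule e_pair, rule e_refl)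

lemma assoc: "typed f A B \<Longrightarrow> typed g B C \<Longrightarrow> typed h C D \<Longrightarrow>
     peq A D (Comp (Comp h g) f) (Comp h (Comp g f))"
  by (rule e_sym, rule e_assoc)

lemma pair_comp: "typed f B C \<Longrightarrow> typed g B D \<Longrightarrow> typed h A B \<Longrightarrow>
   peq A (Prod C D) (Comp (Pair f g) h) (Pair (Comp f h) (Comp g h))"
proof -
  assume a: "typed f B C" "typed g B D" "typed h A B"
  have "peq A (Prod C D) (Comp (Pair f g) h) (Pair (Comp (Fst C D) (Comp (Pair f g) h)) (Comp (Snd C D) (Comp (Pair f g) h)))"
    by (rule e_sym, rule e_pair_eta) (use a in \<open>blast intro: ty\<close>)
  also have "peq A (Prod C D) \<dots> (Pair (Comp f h) (Comp g h))"
  proof (rule e_pair)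
    have "peq A C (Comp (Fst C D) (Comp (Pair f g) h)) (Comp (Comp (Fst C D) (Pair f g)) h)"
      by (rule e_assoc) (use a in \<open>blast intro: ty\<close>)+
    also have "peq A C \<dots> (Comp f h)" by (rule cong_l, rule e_fst) (use a in auto)
    finally show "peq A C (Comp (Fst C D) (Comp (Pair f g) h)) (Comp f h)" .
    have "peq A D (Comp (Snd C D) (Comp (Pair f g) h)) (Comp (Comp (Snd C D) (Pair f g)) h)"
      by (rule e_assoc) (use a in \<open>blast intro: ty\<close>)+
    also have "peq A D \<dots> (Comp g h)" by (rule cong_l, rule e_snd) (use a in auto)
    finally show "peq A D (Comp (Snd C D) (Comp (Pair f g) h)) (Comp g h)" .
  qed
  finally show ?thesis .
qed


lemma bang_comp: "typed h A B \<Longrightarrow> peq A One (Comp (Bang B) h) (Bang A)"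
  by (rule e_term) (blast intro: ty)

lemma trueA_comp: "typed h A B \<Longrightarrow> peq A NN (Comp (ptrueA B) h) (ptrueA A)"
proof -
  assume h: "typed h A B"
  have "peq A NN (Comp (ptrueA B) h) (Comp ptrue (Comp (Bang B) h))"
    unfolding ptrueA_def by (rule assoc) (use h in \<open>blast intro: ty\<close>)+
  also have "peq A NN \<dots> (ptrueA A)" unfolding ptrueA_def
    by (rule cong_r, blast, rule bang_comp, rule h)
  finally show ?thesis .
qed

lemma zero_bang_comp: "typed h A B \<Longrightarrow> peq A NN (Comp (Comp Zero (Bang B)) h) (Comp Zero (Bang A))"
proof -
  assume h: "typed h A B"
  have "peq A NN (Comp (Comp Zero (Bang B)) h) (Comp Zero (Comp (Bang B) h))"
    by (rule assoc) (use h in \<open>blast intro: ty\<close>)+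
  also have "peq A NN \<dots> (Comp Zero (Bang A))"
    by (rule cong_r, rule ty, rule bang_comp, rule h)
  finally show ?thesis .
qed

lemma fst_pair: "typed f A B \<Longrightarrow> typed g A C \<Longrightarrow> peq A B (Comp (Fst B C) (Pair f g)) f"
  by (rule e_fst)
lemma snd_pair: "typed f A B \<Longrightarrow> typed g A C \<Longrightarrow> peq A C (Comp (Snd B C) (Pair f g)) g"
  by (rule e_snd)

lemma zeroA_comp: "typed x X A \<Longrightarrow>
  peq X (Prod A NN) (Comp (zeroA A) x) (Pair x (Comp Zero (Bang X)))"
proof -
  assume x: "typed x X A"
  have "peq X (Prod A NN) (Comp (zeroA A) x) (Pair (Comp (Id A) x) (Comp (Comp Zero (Bang A)) x))"
    unfolding zeroA_def by (rule pair_comp) (use x in \<open>blast intro: ty\<close>)+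
  also have "peq X (Prod A NN) \<dots> (Pair x (Comp Zero (Bang X)))"
    by (rule e_pair, rule e_idl, rule x, rule zero_bang_comp, rule x)
  finally show ?thesis .
qed

lemma succA_comp: "typed x X A \<Longrightarrow> typed n X NN \<Longrightarrow>
  peq X (Prod A NN) (Comp (succA A) (Pair x n)) (Pair x (Comp Succ n))"
proof -
  assume x: "typed x X A" and n: "typed n X NN"
  have "peq X (Prod A NN) (Comp (succA A) (Pair x n)) (Pair (Comp (Fst A NN) (Pair x n)) (Comp (Comp Succ (Snd A NN)) (Pair x n)))"
    unfolding succA_def by (rule pair_comp) (use x n in \<open>blast intro: ty\<close>)+
  also have "peq X (Prod A NN) \<dots> (Pair x (Comp Succ n))"
  proof (rule e_pair)
    show "peq X A (Comp (Fst A NN) (Pair x n)) x" by (rule e_fst) (use x n in auto)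
    have "peq X NN (Comp (Comp Succ (Snd A NN)) (Pair x n)) (Comp Succ (Comp (Snd A NN) (Pair x n)))"
      by (rule assoc) (use x n in \<open>blast intro: ty\<close>)+
    also have "peq X NN \<dots> (Comp Succ n)" by (rule cong_r, rule ty, rule e_snd) (use x n in auto)
    finally show "peq X NN (Comp (Comp Succ (Snd A NN)) (Pair x n)) (Comp Succ n)" .
  qed
  finally show ?thesis .
qed

lemma iter_zero: "typed f A A \<Longrightarrow> typed x X A \<Longrightarrow>
  peq X A (Comp (Iter f) (Pair x (Comp Zero (Bang X)))) x"
proof -
  assume f: "typed f A A" and x: "typed x X A"
  have "peq X A (Comp (Iter f) (Pair x (Comp Zero (Bang X)))) (Comp (Iter f) (Comp (zeroA A) x))"
    by (rule cong_r, rule ty, rule f, rule e_sym, rule zeroA_comp, rule x)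
  also have "peq X A \<dots> (Comp (Comp (Iter f) (zeroA A)) x)"
    by (rule e_assoc) (use f x in \<open>blast intro: ty\<close>)+
  also have "peq X A \<dots> (Comp (Id A) x)" by (rule cong_l, rule e_iter0, rule f, rule x)
  also have "peq X A \<dots> x" by (rule e_idl, rule x)
  finally show ?thesis .
qed

lemma iter_succ: "typed f A A \<Longrightarrow> typed x X A \<Longrightarrow> typed n X NN \<Longrightarrow>
  peq X A (Comp (Iter f) (Pair x (Comp Succ n))) (Comp f (Comp (Iter f) (Pair x n)))"
proof -
  assume f: "typed f A A" and x: "typed x X A" and n: "typed n X NN"
  have "peq X A (Comp (Iter f) (Pair x (Comp Succ n))) (Comp (Iter f) (Comp (succA A) (Pair x n)))"
    by (rule cong_r, rule ty, rule f, rule e_sym, rule succA_comp, rule x, rule n)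
  also have "peq X A \<dots> (Comp (Comp (Iter f) (succA A)) (Pair x n))"
    by (rule e_assoc) (use f x n in \<open>blast intro: ty\<close>)+
  also have "peq X A \<dots> (Comp (Comp f (Iter f)) (Pair x n))"
    by (rule cong_l, rule e_iterS, rule f) (use x n in \<open>blast intro: ty\<close>)
  also have "peq X A \<dots> (Comp f (Comp (Iter f) (Pair x n)))"
    by (rule assoc) (use f x n in \<open>blast intro: ty\<close>)+
  finally show ?thesis .
qed

lemma padd_zero: "typed x X NN \<Longrightarrow> peq X NN (Comp padd (Pair x (Comp Zero (Bang X)))) x"
  unfolding padd_def by (rule iter_zero, rule ty)
lemma padd_succ: "typed x X NN \<Longrightarrow> typed n X NN \<Longrightarrow>
   peq X NN (Comp padd (Pair x (Comp Succ n))) (Comp Succ (Comp padd (Pair x n)))"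
  unfolding padd_def by (rule iter_succ, rule ty)


lemma true_eq: "peq X NN (ptrueA X) (Comp Succ (Comp Zero (Bang X)))"
  unfolding ptrueA_def ptrue_def by (rule assoc) (blast intro: ty)+

lemma neg_zero: "peq X NN (Comp pneg (Comp Zero (Bang X))) (ptrueA X)"
proof -
  let ?z = "Comp Zero (Bang NN)"
  have "peq X NN (Comp pneg (Comp Zero (Bang X)))
      (Comp (Iter ?z) (Comp (Pair (ptrueA NN) (Id NN)) (Comp Zero (Bang X))))"
    unfolding pneg_def by (rule assoc) (blast intro: ty)+
  also have "peq X NN \<dots> (Comp (Iter ?z) (Pair (Comp (ptrueA NN) (Comp Zero (Bang X))) (Comp (Id NN) (Comp Zero (Bang X)))))"
    by (rule cong_r, blast intro: ty, rule pair_comp) (blast intro: ty)+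
  also have "peq X NN \<dots> (Comp (Iter ?z) (Pair (ptrueA X) (Comp Zero (Bang X))))"
    by (rule cong_r, blast intro: ty, rule e_pair, rule trueA_comp, blast intro: ty, rule e_idl, blast intro: ty)
  also have "peq X NN \<dots> (ptrueA X)" by (rule iter_zero) (blast intro: ty)+
  finally show ?thesis .
qed

lemma neg_succ: "typed n X NN \<Longrightarrow> peq X NN (Comp pneg (Comp Succ n)) (Comp Zero (Bang X))"
proof -
  assume n: "typed n X NN"
  let ?z = "Comp Zero (Bang NN)"
  have "peq X NN (Comp pneg (Comp Succ n))
      (Comp (Iter ?z) (Comp (Pair (ptrueA NN) (Id NN)) (Comp Succ n)))"
    unfolding pneg_def by (rule assoc) (use n in \<open>blast intro: ty\<close>)+
  also have "peq X NN \<dots> (Comp (Iter ?z) (Pair (Comp (ptrueA NN) (Comp Succ n)) (Comp (Id NN) (Comp Succ n))))"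
    by (rule cong_r, blast intro: ty, rule pair_comp) (use n in \<open>blast intro: ty\<close>)+
  also have "peq X NN \<dots> (Comp (Iter ?z) (Pair (ptrueA X) (Comp Succ n)))"
    by (rule cong_r, blast intro: ty, rule e_pair, rule trueA_comp) (use n in \<open>blast intro: ty\<close>, rule e_idl, use n in \<open>blast intro: ty\<close>)
  also have "peq X NN \<dots> (Comp ?z (Comp (Iter ?z) (Pair (ptrueA X) n)))"
    by (rule iter_succ) (use n in \<open>blast intro: ty\<close>)+
  also have "peq X NN \<dots> (Comp Zero (Bang X))"
    by (rule zero_bang_comp) (use n in \<open>blast intro: ty\<close>)
  finally show ?thesis .
qed

lemma neg_true: "peq X NN (Comp pneg (ptrueA X)) (Comp Zero (Bang X))"
proof -
  have "peq X NN (Comp pneg (ptrueA X)) (Comp pneg (Comp Succ (Comp Zero (Bang X))))"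
    by (rule cong_r, blast, rule true_eq)
  also have "peq X NN \<dots> (Comp Zero (Bang X))" by (rule neg_succ) (blast intro: ty)
  finally show ?thesis .
qed

lemma after_snd_id: "typed m P C \<Longrightarrow> typed u P B \<Longrightarrow>
   peq P C (Comp (Comp m (Snd B P)) (Pair u (Id P))) m"
proof -
  assume m: "typed m P C" and u: "typed u P B"
  have "peq P C (Comp (Comp m (Snd B P)) (Pair u (Id P))) (Comp m (Comp (Snd B P) (Pair u (Id P))))"
    by (rule assoc) (use m u in \<open>blast intro: ty\<close>)+
  also have "peq P C \<dots> (Comp m (Id P))" by (rule cong_r, rule m, rule e_snd) (use u in \<open>blast intro: ty\<close>)+
  also have "peq P C \<dots> m" by (rule e_idr, rule m)
  finally show ?thesis .
qed

lemma case_step: "typed h (Prod X NN) B \<Longrightarrow> typed m (Prod X NN) B \<Longrightarrow>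
  peq (Prod X NN) B (Comp h (succA X)) m \<Longrightarrow>
  peq (Prod X NN) (Prod B (Prod X NN))
   (Comp (Pair h (Id (Prod X NN))) (succA X))
   (Comp (Pair (Comp m (Snd B (Prod X NN))) (Comp (succA X) (Snd B (Prod X NN)))) (Pair h (Id (Prod X NN))))"
proof -
  assume h: "typed h (Prod X NN) B" and m: "typed m (Prod X NN) B" and e: "peq (Prod X NN) B (Comp h (succA X)) m"
  let ?P = "Prod X NN"
  have "peq ?P (Prod B ?P) (Comp (Pair h (Id ?P)) (succA X)) (Pair (Comp h (succA X)) (Comp (Id ?P) (succA X)))"
    by (rule pair_comp) (use h in \<open>blast intro: ty\<close>)+
  also have "peq ?P (Prod B ?P) \<dots> (Pair m (succA X))"
    by (rule e_pair, rule e, rule e_idl, blast)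
  also have "peq ?P (Prod B ?P) \<dots> (Pair (Comp (Comp m (Snd B ?P)) (Pair h (Id ?P))) (Comp (Comp (succA X) (Snd B ?P)) (Pair h (Id ?P))))"
    by (rule e_sym, rule e_pair, rule after_snd_id, rule m, rule h, rule after_snd_id, blast, rule h)
  also have "peq ?P (Prod B ?P) \<dots> (Comp (Pair (Comp m (Snd B (Prod X NN))) (Comp (succA X) (Snd B (Prod X NN)))) (Pair h (Id (Prod X NN))))"
    by (rule e_sym, rule pair_comp) (use m h in \<open>blast intro: ty\<close>)+
  finally show ?thesis .
qed

lemma cases_N: "typed h (Prod X NN) B \<Longrightarrow> typed k (Prod X NN) B \<Longrightarrow>
  peq X B (Comp h (zeroA X)) (Comp k (zeroA X)) \<Longrightarrow>
  peq (Prod X NN) B (Comp h (succA X)) (Comp k (succA X)) \<Longrightarrow>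
  peq (Prod X NN) B h k"
proof -
  assume h: "typed h (Prod X NN) B" and k: "typed k (Prod X NN) B"
    and z: "peq X B (Comp h (zeroA X)) (Comp k (zeroA X))"
    and s: "peq (Prod X NN) B (Comp h (succA X)) (Comp k (succA X))"
  let ?P = "Prod X NN"
  let ?H = "Pair h (Id ?P)" and ?K = "Pair k (Id ?P)"
  let ?G = "Pair (Comp (Comp h (succA X)) (Snd B ?P)) (Comp (succA X) (Snd B ?P))"
  let ?f = "Comp ?H (zeroA X)"
  have tH: "typed ?H ?P (Prod B ?P)" using h by (blast intro: ty)
  have tK: "typed ?K ?P (Prod B ?P)" using k by (blast intro: ty)
  have tG: "typed ?G (Prod B ?P) (Prod B ?P)" using h by (blast intro: ty)
  have tf: "typed ?f X (Prod B ?P)" using h by (blast intro: ty)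
  have hk: "peq ?P (Prod B ?P) ?H (Comp (Iter ?G) (Pair (Comp ?f (Fst X NN)) (Snd X NN)))"
    by (rule e_freyd[OF tH tf tG], rule e_refl, rule tf, rule case_step, rule h, blast intro: ty h,
        rule e_refl, blast intro: ty h)
  have kz: "peq X (Prod B ?P) (Comp ?K (zeroA X)) ?f"
  proof -
    have "peq X (Prod B ?P) (Comp ?K (zeroA X)) (Pair (Comp k (zeroA X)) (Comp (Id ?P) (zeroA X)))"
      by (rule pair_comp) (use k in \<open>blast intro: ty\<close>)+
    also have "peq X (Prod B ?P) \<dots> (Pair (Comp h (zeroA X)) (Comp (Id ?P) (zeroA X)))"
      by (rule cong_p1, rule e_sym, rule z, blast intro: ty)
    also have "peq X (Prod B ?P) \<dots> ?f"
      by (rule e_sym, rule pair_comp) (use h in \<open>blast intro: ty\<close>)+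
    finally show ?thesis .
  qed
  have kk: "peq ?P (Prod B ?P) ?K (Comp (Iter ?G) (Pair (Comp ?f (Fst X NN)) (Snd X NN)))"
    by (rule e_freyd[OF tK tf tG], rule kz, rule case_step, rule k, blast intro: ty h, rule e_sym, rule s)
  have HK: "peq ?P (Prod B ?P) ?H ?K" by (rule e_trans, rule hk, rule e_sym, rule kk)
  have "peq ?P B h (Comp (Fst B ?P) ?H)" by (rule e_sym, rule e_fst, rule h, rule ty)
  also have "peq ?P B \<dots> (Comp (Fst B ?P) ?K)" by (rule cong_r, blast intro: ty, rule HK)
  also have "peq ?P B \<dots> k" by (rule e_fst, rule k, rule ty)
  finally show ?thesis .
qed


lemma snd_zeroA: "peq X NN (Comp (Snd X NN) (zeroA X)) (Comp Zero (Bang X))"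
  unfolding zeroA_def by (rule e_snd) (blast intro: ty)+
lemma fst_zeroA: "peq X X (Comp (Fst X NN) (zeroA X)) (Id X)"
  unfolding zeroA_def by (rule e_fst) (blast intro: ty)+
lemma snd_succA: "peq (Prod X NN) NN (Comp (Snd X NN) (succA X)) (Comp Succ (Snd X NN))"
  unfolding succA_def by (rule e_snd) (blast intro: ty)+
lemma fst_succA: "peq (Prod X NN) X (Comp (Fst X NN) (succA X)) (Fst X NN)"
  unfolding succA_def by (rule e_fst) (blast intro: ty)+

lemma push_padd: "typed a Y NN \<Longrightarrow> typed b Y NN \<Longrightarrow> typed u Z Y \<Longrightarrow>
  peq Z NN (Comp (Comp padd (Pair a b)) u) (Comp padd (Pair (Comp a u) (Comp b u)))"
proof -
  assume a: "typed a Y NN" and b: "typed b Y NN" and u: "typed u Z Y"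
  have "peq Z NN (Comp (Comp padd (Pair a b)) u) (Comp padd (Comp (Pair a b) u))"
    by (rule assoc) (use a b u in \<open>blast intro: ty\<close>)+
  also have "peq Z NN \<dots> (Comp padd (Pair (Comp a u) (Comp b u)))"
    by (rule cong_r, blast, rule pair_comp, rule a, rule b, rule u)
  finally show ?thesis .
qed

lemma padd_zl_one: "peq (Prod One NN) NN (Comp padd (Pair (Comp Zero (Bang (Prod One NN))) (Snd One NN))) (Snd One NN)"
proof -
  let ?P = "Prod One NN"
  let ?h = "Comp padd (Pair (Comp Zero (Bang ?P)) (Snd One NN))"
  let ?f = "Comp Zero (Bang One)"
  let ?R = "Comp (Iter Succ) (Pair (Comp ?f (Fst One NN)) (Snd One NN))"
  have th: "typed ?h ?P NN" by (blast intro: ty)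
  have tf: "typed ?f One NN" by (blast intro: ty)
  have h0: "peq One NN (Comp ?h (zeroA One)) ?f"
  proof -
    have "peq One NN (Comp ?h (zeroA One)) (Comp padd (Pair (Comp (Comp Zero (Bang ?P)) (zeroA One)) (Comp (Snd One NN) (zeroA One))))"
      by (rule push_padd) (blast intro: ty)+
    also have "peq One NN \<dots> (Comp padd (Pair ?f ?f))"
      by (rule cong_r, blast, rule e_pair, rule zero_bang_comp, blast, rule snd_zeroA)
    also have "peq One NN \<dots> ?f" by (rule padd_zero) (blast intro: ty)
    finally show ?thesis .
  qed
  have hs: "peq ?P NN (Comp ?h (succA One)) (Comp Succ ?h)"
  proof -
    have "peq ?P NN (Comp ?h (succA One)) (Comp padd (Pair (Comp (Comp Zero (Bang ?P)) (succA One)) (Comp (Snd One NN) (succA One))))"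
      by (rule push_padd) (blast intro: ty)+
    also have "peq ?P NN \<dots> (Comp padd (Pair (Comp Zero (Bang ?P)) (Comp Succ (Snd One NN))))"
      by (rule cong_r, blast, rule e_pair, rule zero_bang_comp, blast, rule snd_succA)
    also have "peq ?P NN \<dots> (Comp Succ ?h)" by (rule padd_succ) (blast intro: ty)+
    finally show ?thesis .
  qed
  have 1: "peq ?P NN ?h ?R" unfolding padd_def
    by (rule e_freyd, fold padd_def, rule th, rule tf, rule ty, rule h0, rule hs)
  have 2: "peq ?P NN (Snd One NN) ?R"
    by (rule e_freyd, rule ty, rule tf, rule ty, rule snd_zeroA, rule snd_succA)
  show ?thesis by (rule e_trans, rule 1, rule e_sym, rule 2)
qed

lemma padd_zl: "typed y Y NN \<Longrightarrow> peq Y NN (Comp padd (Pair (Comp Zero (Bang Y)) y)) y"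
proof -
  assume y: "typed y Y NN"
  let ?P = "Prod One NN"
  let ?u = "Pair (Bang Y) y"
  have tu: "typed ?u Y ?P" using y by (blast intro: ty)
  have "peq Y NN (Comp padd (Pair (Comp Zero (Bang Y)) y)) (Comp padd (Pair (Comp (Comp Zero (Bang ?P)) ?u) (Comp (Snd One NN) ?u)))"
    by (rule cong_r, blast, rule e_sym, rule e_pair, rule zero_bang_comp, rule tu, rule e_snd, rule ty, rule y)
  also have "peq Y NN \<dots> (Comp (Comp padd (Pair (Comp Zero (Bang ?P)) (Snd One NN))) ?u)"
    by (rule e_sym, rule push_padd) (use tu in \<open>blast intro: ty\<close>)+
  also have "peq Y NN \<dots> (Comp (Snd One NN) ?u)" by (rule cong_l, rule padd_zl_one, rule tu)
  also have "peq Y NN \<dots> y" by (rule e_snd, rule ty, rule y)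
  finally show ?thesis .
qed


lemma cong_D: "peq Y NN a a' \<Longrightarrow>
  peq Y NN (Comp pneg (Comp padd (Pair a (Comp pneg a)))) (Comp pneg (Comp padd (Pair a' (Comp pneg a'))))"
  by (rule cong_r, blast, rule cong_r, blast, rule e_pair, assumption, rule cong_r, blast, assumption)

lemma push_D: "typed a Y NN \<Longrightarrow> typed u Z Y \<Longrightarrow>
  peq Z NN (Comp (Comp pneg (Comp padd (Pair a (Comp pneg a)))) u) (Comp pneg (Comp padd (Pair (Comp a u) (Comp pneg (Comp a u)))))"
proof -
  assume a: "typed a Y NN" and u: "typed u Z Y"
  have "peq Z NN (Comp (Comp pneg (Comp padd (Pair a (Comp pneg a)))) u) (Comp pneg (Comp (Comp padd (Pair a (Comp pneg a))) u))"
    by (rule assoc) (use a u in \<open>blast intro: ty\<close>)+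
  also have "peq Z NN \<dots> (Comp pneg (Comp padd (Pair (Comp a u) (Comp (Comp pneg a) u))))"
    by (rule cong_r, blast, rule push_padd) (use a u in \<open>blast intro: ty\<close>)+
  also have "peq Z NN \<dots> (Comp pneg (Comp padd (Pair (Comp a u) (Comp pneg (Comp a u)))))"
    by (rule cong_r, blast, rule cong_r, blast, rule cong_p2) (use a u in \<open>blast intro: ty assoc\<close>)+
  finally show ?thesis .
qed

lemma D_one: "peq (Prod One NN) NN (Comp pneg (Comp padd (Pair (Snd One NN) (Comp pneg (Snd One NN))))) (Comp Zero (Bang (Prod One NN)))"
proof (rule cases_N)
  let ?P = "Prod One NN"
  let ?r = "Snd One NN"
  let ?d = "Comp pneg (Comp padd (Pair ?r (Comp pneg ?r)))"
  let ?o = "Comp Zero (Bang One)"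
  show "typed ?d ?P NN" by (blast intro: ty)
  show "typed (Comp Zero (Bang ?P)) ?P NN" by (blast intro: ty)
  have "peq One NN (Comp ?d (zeroA One)) (Comp pneg (Comp padd (Pair (Comp ?r (zeroA One)) (Comp pneg (Comp ?r (zeroA One))))))"
    by (rule push_D) (blast intro: ty)+
  also have "peq One NN \<dots> (Comp pneg (Comp padd (Pair ?o (Comp pneg ?o))))"
    by (rule cong_D, rule snd_zeroA)
  also have "peq One NN \<dots> (Comp pneg (Comp padd (Pair ?o (Comp Succ ?o))))"
    by (rule cong_r, blast, rule cong_r, blast, rule cong_p2, blast intro: ty, rule e_trans, rule neg_zero, rule true_eq)
  also have "peq One NN \<dots> (Comp pneg (Comp Succ (Comp padd (Pair ?o ?o))))"
    by (rule cong_r, blast, rule padd_succ) (blast intro: ty)+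
  also have "peq One NN \<dots> ?o" by (rule neg_succ) (blast intro: ty)
  also have "peq One NN \<dots> (Comp (Comp Zero (Bang ?P)) (zeroA One))"
    by (rule e_sym, rule zero_bang_comp, blast)
  finally show "peq One NN (Comp ?d (zeroA One)) (Comp (Comp Zero (Bang ?P)) (zeroA One))" .
  have "peq ?P NN (Comp ?d (succA One)) (Comp pneg (Comp padd (Pair (Comp ?r (succA One)) (Comp pneg (Comp ?r (succA One))))))"
    by (rule push_D) (blast intro: ty)+
  also have "peq ?P NN \<dots> (Comp pneg (Comp padd (Pair (Comp Succ ?r) (Comp pneg (Comp Succ ?r)))))"
    by (rule cong_D, rule snd_succA)
  also have "peq ?P NN \<dots> (Comp pneg (Comp padd (Pair (Comp Succ ?r) (Comp Zero (Bang ?P)))))"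
    by (rule cong_r, blast, rule cong_r, blast, rule cong_p2, blast intro: ty, rule neg_succ, rule ty)
  also have "peq ?P NN \<dots> (Comp pneg (Comp Succ ?r))"
    by (rule cong_r, blast, rule padd_zero) (blast intro: ty)+
  also have "peq ?P NN \<dots> (Comp Zero (Bang ?P))" by (rule neg_succ, rule ty)
  also have "peq ?P NN \<dots> (Comp (Comp Zero (Bang ?P)) (succA One))"
    by (rule e_sym, rule zero_bang_comp, blast)
  finally show "peq ?P NN (Comp ?d (succA One)) (Comp (Comp Zero (Bang ?P)) (succA One))" .
qed

lemma D_gen: "typed p Y NN \<Longrightarrow> peq Y NN (Comp pneg (Comp padd (Pair p (Comp pneg p)))) (Comp Zero (Bang Y))"
proof -
  assume p: "typed p Y NN"
  let ?P = "Prod One NN"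
  let ?r = "Snd One NN"
  let ?u = "Pair (Bang Y) p"
  have tu: "typed ?u Y ?P" using p by (blast intro: ty)
  have "peq Y NN (Comp pneg (Comp padd (Pair p (Comp pneg p)))) (Comp pneg (Comp padd (Pair (Comp ?r ?u) (Comp pneg (Comp ?r ?u)))))"
    by (rule cong_D, rule e_sym, rule e_snd, rule ty, rule p)
  also have "peq Y NN \<dots> (Comp (Comp pneg (Comp padd (Pair ?r (Comp pneg ?r)))) ?u)"
    by (rule e_sym, rule push_D, rule ty, rule tu)
  also have "peq Y NN \<dots> (Comp (Comp Zero (Bang ?P)) ?u)" by (rule cong_l, rule D_one, rule tu)
  also have "peq Y NN \<dots> (Comp Zero (Bang Y))" by (rule zero_bang_comp, rule tu)
  finally show ?thesis .
qed


lemma imp_unfold: "typed p Y NN \<Longrightarrow> typed q Y NN \<Longrightarrow>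
  peq Y NN (Comp pimp (Pair p q)) (Comp psign (Comp padd (Pair (Comp pneg p) q)))"
proof -
  assume p: "typed p Y NN" and q: "typed q Y NN"
  let ?Pq = "Pair (Comp pneg (Fst NN NN)) (Snd NN NN)"
  have "peq Y NN (Comp pimp (Pair p q)) (Comp por (Comp ?Pq (Pair p q)))"
    unfolding pimp_def by (rule assoc) (use p q in \<open>blast intro: ty\<close>)+
  also have "peq Y NN \<dots> (Comp por (Pair (Comp (Comp pneg (Fst NN NN)) (Pair p q)) (Comp (Snd NN NN) (Pair p q))))"
    by (rule cong_r, blast, rule pair_comp) (use p q in \<open>blast intro: ty\<close>)+
  also have "peq Y NN \<dots> (Comp por (Pair (Comp pneg (Comp (Fst NN NN) (Pair p q))) q))"
    by (rule cong_r, blast, rule e_pair, rule assoc, use p q in \<open>blast intro: ty\<close>,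
        use p q in \<open>blast intro: ty\<close>, blast, rule e_snd, rule p, rule q)
  also have "peq Y NN \<dots> (Comp por (Pair (Comp pneg p) q))"
    by (rule cong_r, blast, rule cong_p1, rule cong_r, blast, rule e_fst, rule p, rule q,
        rule q)
  also have "peq Y NN \<dots> (Comp psign (Comp padd (Pair (Comp pneg p) q)))"
    unfolding por_def by (rule assoc) (use p q in \<open>blast intro: ty\<close>)+
  finally show ?thesis .
qed

lemma lW: "typed m X C \<Longrightarrow> typed w X D \<Longrightarrow> peq X C (Comp (Comp m (Fst X D)) (Pair (Id X) w)) m"
proof -
  assume m: "typed m X C" and w: "typed w X D"
  have "peq X C (Comp (Comp m (Fst X D)) (Pair (Id X) w)) (Comp m (Comp (Fst X D) (Pair (Id X) w)))"
    by (rule assoc) (use m w in \<open>blast intro: ty\<close>)+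
  also have "peq X C \<dots> (Comp m (Id X))" by (rule cong_r, rule m, rule e_fst, rule ty, rule w)
  also have "peq X C \<dots> m" by (rule e_idr, rule m)
  finally show ?thesis .
qed

lemma rW: "typed m D C \<Longrightarrow> typed w X D \<Longrightarrow> peq X C (Comp (Comp m (Snd X D)) (Pair (Id X) w)) (Comp m w)"
proof -
  assume m: "typed m D C" and w: "typed w X D"
  have "peq X C (Comp (Comp m (Snd X D)) (Pair (Id X) w)) (Comp m (Comp (Snd X D) (Pair (Id X) w)))"
    by (rule assoc) (use m w in \<open>blast intro: ty\<close>)+
  also have "peq X C \<dots> (Comp m w)" by (rule cong_r, rule m, rule e_snd, rule ty, rule w)
  finally show ?thesis .
qed

lemma GW:
  assumes ph: "typed phi (Prod A NN) NN" and w: "typed w (Prod A NN) NN"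
  shows "peq (Prod A NN) (Prod (Prod A NN) NN)
   (Comp (Pair (Comp (succA A) (Fst (Prod A NN) NN))
     (Comp psign (Comp padd (Pair (Comp pneg (Comp padd (Pair (Comp phi (Fst (Prod A NN) NN)) (Comp pneg (Snd (Prod A NN) NN)))))
        (Comp phi (Comp (succA A) (Fst (Prod A NN) NN)))))))
     (Pair (Id (Prod A NN)) w))
   (Pair (succA A) (Comp psign (Comp padd (Pair (Comp pneg (Comp padd (Pair phi (Comp pneg w)))) (Comp phi (succA A))))))"
proof -
  let ?X = "Prod A NN"
  let ?l = "Fst ?X NN" and ?r = "Snd ?X NN"
  let ?W = "Pair (Id ?X) w"
  have tW: "typed ?W ?X (Prod ?X NN)" using w by (blast intro: ty)
  let ?a = "Comp pneg (Comp padd (Pair (Comp phi ?l) (Comp pneg ?r)))"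
  let ?b = "Comp phi (Comp (succA A) ?l)"
  have ta: "typed ?a (Prod ?X NN) NN" using ph by (blast intro: ty)
  have tb: "typed ?b (Prod ?X NN) NN" using ph by (blast intro: ty)
  have "peq ?X (Prod ?X NN) (Comp (Pair (Comp (succA A) ?l) (Comp psign (Comp padd (Pair ?a ?b)))) ?W)
     (Pair (Comp (Comp (succA A) ?l) ?W) (Comp (Comp psign (Comp padd (Pair ?a ?b))) ?W))"
    by (rule pair_comp) (use ta tb tW in \<open>blast intro: ty\<close>)+
  also have "peq ?X (Prod ?X NN) \<dots> (Pair (succA A) (Comp psign (Comp (Comp padd (Pair ?a ?b)) ?W)))"
    by (rule e_pair, rule lW, blast, rule w, rule assoc) (use ta tb tW in \<open>blast intro: ty\<close>)+
  also have "peq ?X (Prod ?X NN) \<dots> (Pair (succA A) (Comp psign (Comp padd (Pair (Comp ?a ?W) (Comp ?b ?W)))))"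
    by (rule cong_p2, blast, rule cong_r, blast, rule push_padd, rule ta, rule tb, rule tW)
  also have "peq ?X (Prod ?X NN) \<dots> (Pair (succA A) (Comp psign (Comp padd (Pair (Comp pneg (Comp padd (Pair phi (Comp pneg w)))) (Comp phi (succA A))))))"
  proof (rule cong_p2, blast, rule cong_r, blast, rule cong_r, blast, rule e_pair)
    have "peq ?X NN (Comp ?a ?W) (Comp pneg (Comp (Comp padd (Pair (Comp phi ?l) (Comp pneg ?r))) ?W))"
      by (rule assoc) (use ph tW in \<open>blast intro: ty\<close>)+
    also have "peq ?X NN \<dots> (Comp pneg (Comp padd (Pair (Comp (Comp phi ?l) ?W) (Comp (Comp pneg ?r) ?W))))"
      by (rule cong_r, blast, rule push_padd) (use ph tW in \<open>blast intro: ty\<close>)+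
    also have "peq ?X NN \<dots> (Comp pneg (Comp padd (Pair phi (Comp pneg w))))"
      by (rule cong_r, blast, rule cong_r, blast, rule e_pair, rule lW, rule ph, rule w, rule rW, blast, rule w)
    finally show "peq ?X NN (Comp ?a ?W) (Comp pneg (Comp padd (Pair phi (Comp pneg w))))" .
    have "peq ?X NN (Comp ?b ?W) (Comp phi (Comp (Comp (succA A) ?l) ?W))"
      by (rule assoc) (use ph tW in \<open>blast intro: ty\<close>)+
    also have "peq ?X NN \<dots> (Comp phi (succA A))"
      by (rule cong_r, rule ph, rule lW, blast, rule w)
    finally show "peq ?X NN (Comp ?b ?W) (Comp phi (succA A))" .
  qed
  finally show ?thesis .
qed

lemma W_zero: "typed w (Prod A NN) NN \<Longrightarrow>
   peq A (Prod (Prod A NN) NN) (Comp (Pair (Id (Prod A NN)) w) (zeroA A)) (Pair (zeroA A) (Comp w (zeroA A)))"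
proof -
  assume w: "typed w (Prod A NN) NN"
  have "peq A (Prod (Prod A NN) NN) (Comp (Pair (Id (Prod A NN)) w) (zeroA A)) (Pair (Comp (Id (Prod A NN)) (zeroA A)) (Comp w (zeroA A)))"
    by (rule pair_comp) (use w in \<open>blast intro: ty\<close>)+
  also have "peq A (Prod (Prod A NN) NN) \<dots> (Pair (zeroA A) (Comp w (zeroA A)))"
    by (rule cong_p1, rule e_idl, blast) (use w in \<open>blast intro: ty\<close>)
  finally show ?thesis .
qed

lemma W_succ: "typed w (Prod A NN) NN \<Longrightarrow>
   peq (Prod A NN) (Prod (Prod A NN) NN) (Comp (Pair (Id (Prod A NN)) w) (succA A)) (Pair (succA A) (Comp w (succA A)))"
proof -
  assume w: "typed w (Prod A NN) NN"
  have "peq (Prod A NN) (Prod (Prod A NN) NN) (Comp (Pair (Id (Prod A NN)) w) (succA A)) (Pair (Comp (Id (Prod A NN)) (succA A)) (Comp w (succA A)))"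
    by (rule pair_comp) (use w in \<open>blast intro: ty\<close>)+
  also have "peq (Prod A NN) (Prod (Prod A NN) NN) \<dots> (Pair (succA A) (Comp w (succA A)))"
    by (rule cong_p1, rule e_idl, blast) (use w in \<open>blast intro: ty\<close>)
  finally show ?thesis .
qed


theorem mainTheorem4:
  assumes "typed phi (Prod A NN) NN"
    and "peq (Prod A NN) NN (Comp psign phi) phi"
    and "peq A NN (Comp phi (zeroA A)) (ptrueA A)"
    and "peq (Prod A NN) NN (Comp pimp (Pair phi (Comp phi (succA A)))) (ptrueA (Prod A NN))"
  shows "peq (Prod A NN) NN phi (ptrueA (Prod A NN))"
proof -
  note ph = assms(1) and bool = assms(2) and base = assms(3) and step = assms(4)
  let ?X = "Prod A NN"
  let ?S = "Prod ?X NN"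
  let ?l = "Fst ?X NN" and ?r = "Snd ?X NN"
  let ?G = "Pair (Comp (succA A) ?l)
     (Comp psign (Comp padd (Pair (Comp pneg (Comp padd (Pair (Comp phi ?l) (Comp pneg ?r))))
        (Comp phi (Comp (succA A) ?l)))))"
  let ?H = "Pair (Id ?X) phi" and ?K = "Pair (Id ?X) (ptrueA ?X)"
  let ?f = "Pair (zeroA A) (ptrueA A)"
  have tG: "typed ?G ?S ?S" using ph by (blast intro: ty)
  have tH: "typed ?H ?X ?S" using ph by (blast intro: ty)
  have tK: "typed ?K ?X ?S" by (blast intro: ty)
  have tf: "typed ?f A ?S" by (blast intro: ty)
  have tq: "typed (Comp phi (succA A)) ?X NN" using ph by (blast intro: ty)
  have H0: "peq A ?S (Comp ?H (zeroA A)) ?f"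
    by (rule e_trans, rule W_zero, rule ph, rule cong_p2, blast, rule base)
  have HS: "peq ?X ?S (Comp ?H (succA A)) (Comp ?G ?H)"
  proof -
    have "peq ?X ?S (Comp ?H (succA A)) (Pair (succA A) (Comp phi (succA A)))" by (rule W_succ, rule ph)
    also have "peq ?X ?S \<dots> (Pair (succA A) (Comp psign (Comp padd (Pair (Comp pneg (Comp padd (Pair phi (Comp pneg phi)))) (Comp phi (succA A))))))"
    proof (rule cong_p2, blast)
      have "peq ?X NN (Comp phi (succA A)) (Comp (Comp psign phi) (succA A))"
        by (rule e_sym, rule cong_l, rule bool, blast)
      also have "peq ?X NN \<dots> (Comp psign (Comp phi (succA A)))"
        by (rule assoc) (use ph in \<open>blast intro: ty\<close>)+
      also have "peq ?X NN \<dots> (Comp psign (Comp padd (Pair (Comp Zero (Bang ?X)) (Comp phi (succA A)))))"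
        by (rule cong_r, blast, rule e_sym, rule padd_zl, rule tq)
      also have "peq ?X NN \<dots> (Comp psign (Comp padd (Pair (Comp pneg (Comp padd (Pair phi (Comp pneg phi)))) (Comp phi (succA A)))))"
        by (rule cong_r, blast, rule cong_r, blast, rule cong_p1, rule e_sym, rule D_gen, rule ph, rule tq)
      finally show "peq ?X NN (Comp phi (succA A)) (Comp psign (Comp padd (Pair (Comp pneg (Comp padd (Pair phi (Comp pneg phi)))) (Comp phi (succA A)))))" .
    qed
    also have "peq ?X ?S \<dots> (Comp ?G ?H)" by (rule e_sym, rule GW, rule ph, rule ph)
    finally show ?thesis .
  qed
  have K0: "peq A ?S (Comp ?K (zeroA A)) ?f"
    by (rule e_trans, rule W_zero, blast, rule cong_p2, blast, rule trueA_comp, blast)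
  have KS: "peq ?X ?S (Comp ?K (succA A)) (Comp ?G ?K)"
  proof -
    have "peq ?X ?S (Comp ?K (succA A)) (Pair (succA A) (Comp (ptrueA ?X) (succA A)))" by (rule W_succ, blast)
    also have "peq ?X ?S \<dots> (Pair (succA A) (Comp psign (Comp padd (Pair (Comp pneg (Comp padd (Pair phi (Comp pneg (ptrueA ?X))))) (Comp phi (succA A))))))"
    proof (rule cong_p2, blast)
      have "peq ?X NN (Comp (ptrueA ?X) (succA A)) (ptrueA ?X)" by (rule trueA_comp, blast)
      also have "peq ?X NN \<dots> (Comp pimp (Pair phi (Comp phi (succA A))))" by (rule e_sym, rule step)
      also have "peq ?X NN \<dots> (Comp psign (Comp padd (Pair (Comp pneg phi) (Comp phi (succA A)))))"
        by (rule imp_unfold, rule ph, rule tq)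
      also have "peq ?X NN \<dots> (Comp psign (Comp padd (Pair (Comp pneg (Comp padd (Pair phi (Comp Zero (Bang ?X))))) (Comp phi (succA A)))))"
        by (rule cong_r, blast, rule cong_r, blast, rule cong_p1, rule cong_r, blast, rule e_sym, rule padd_zero, rule ph, rule tq)
      also have "peq ?X NN \<dots> (Comp psign (Comp padd (Pair (Comp pneg (Comp padd (Pair phi (Comp pneg (ptrueA ?X))))) (Comp phi (succA A)))))"
        by (rule cong_r, blast, rule cong_r, blast, rule cong_p1, rule cong_r, blast, rule cong_r, blast,
            rule cong_p2, rule ph, rule e_sym, rule neg_true, rule tq)
      finally show "peq ?X NN (Comp (ptrueA ?X) (succA A)) (Comp psign (Comp padd (Pair (Comp pneg (Comp padd (Pair phi (Comp pneg (ptrueA ?X))))) (Comp phi (succA A)))))" .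
    qed
    also have "peq ?X ?S \<dots> (Comp ?G ?K)" by (rule e_sym, rule GW, rule ph, blast)
    finally show ?thesis .
  qed
  have hH: "peq ?X ?S ?H (Comp (Iter ?G) (Pair (Comp ?f (Fst A NN)) (Snd A NN)))"
    by (rule e_freyd[OF tH tf tG H0 HS])
  have hK: "peq ?X ?S ?K (Comp (Iter ?G) (Pair (Comp ?f (Fst A NN)) (Snd A NN)))"
    by (rule e_freyd[OF tK tf tG K0 KS])
  have HK: "peq ?X ?S ?H ?K" by (rule e_trans, rule hH, rule e_sym, rule hK)
  have "peq ?X NN phi (Comp ?r ?H)" by (rule e_sym, rule e_snd, rule ty, rule ph)
  also have "peq ?X NN \<dots> (Comp ?r ?K)" by (rule cong_r, rule ty, rule HK)
  also have "peq ?X NN \<dots> (ptrueA ?X)" by (rule e_snd, rule ty, blast)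
  finally show ?thesis .
qed

end
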